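(* Let $f(x)=\prod_{a\in\mathcal{F}} f_a(x_a)$ be a factorized model and consider the chance-constrained Bethe free energy Lagrangian \[ \begin{aligned} L[q] &= F[q] + \sum_{i\in \mathcal{V}} \gamma_i \Big[ \int q_i\, dx_i - 1 \Big] + \sum_{a\in \mathcal{F}} \gamma_a \Big[ \int q_a\, dx_a - 1 \Big] \\ &\quad + \sum_{a\in \mathcal{F}} \sum_{i\in \mathcal{V}(a)} \int \zeta_{ia}(x_i)\Big[q_i(x_i) - \int q_a(x_a)\, dx_{a\setminus i}\Big] dx_i + \sum_{i\in \mathcal{V}} \eta_i\Big[\int q_i(x_i)\, g_i(x_i)\, dx_i - (1 - \epsilon)\Big], \end{aligned} \] with $F[q]=-\sum_{a}\int q_a\log f_a\,dx_a+\sum_{a}\int q_a\log q_a\,dx_a-\sum_{i}(d_i-1)\int q_i\log q_i\,dx_i$. For $j\in\mathcal{V}$ let \[ q_j^*(x_j;\eta_j)=\frac{1}{Z_j(\eta_j)}\exp\!\big(-\eta_j g_j(x_j)\big)\prod_{a\in\mathcal{F}(j)}\mu_{aj}(x_j) \] denote the form of the stationary points of $L$ as a functional of $q_j$, where $\mu_{aj}(x_j)=\int f_a(x_a)\prod_{i\in\mathcal{V}(a),i\neq j}\mu_{ia}(x_i)\,dx_{a\setminus j}$, $\mu_{ia}=\exp\zeta_{ia}$, and $Z_j(\eta_j)$ is the normalizer. Define \[ q_j^{(0)}(x_j)=q_j^*(x_j;\eta_j=0),\qquad \Phi_j^{(0)}=\int_{\mathcal{S}_j}q_j^{(0)}(x_j)\,dx_j,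 \] \[ \eta_j^*=\log(\epsilon\,\Phi_j^{(0)})-\log(1-\epsilon)-\log(1-\Phi_j^{(0)}). \] Then, when the chance constraint on $x_j$ is active (i.e. $\int q_j g_j\,dx_j=1-\epsilon$ holds with equality), the stationary points of $L$ as a functional of $q_j$ are of the form \[ q_j^*(x_j;\eta_j=\eta_j^* )=\begin{cases}\dfrac{1-\epsilon}{\Phi_j^{(0)}}\,q_j^{(0)}(x_j) & \text{if } x_j\in\mathcal{S}_j,\\[2mm] \dfrac{\epsilon}{1-\Phi_j^{(0)}}\,q_j^{(0)}(x_j) & \text{otherwise.}\end{cases} \]
   Context: Bipartite factor graph $(\mathcal{F},\mathcal{V},\mathcal{E})$: factor nodes $a\in\mathcal{F}$ with non-negative factor functions $f_a$, variable nodes $i\in\mathcal{V}$, edge $(i,a)$ iff $x_i$ is an argument of $f_a$; $x_a$ collects variables $x_i$, $i\in\mathcal{V}(a)$; $\mathcal{V}(a)$, $\mathcal{F}(i)$ denote neighborhoods, $d_i=|\mathcal{F}(i)|$, and $x_{a\setminus i}$ denotes all variables of $x_a$ except $x_i$. The functional's arguments are beliefs $q_a(x_a)$ and $q_i(x_i)$. A chance constraint on $x_j$ requires $1-\epsilon\le\int_{\mathcal{S}_j}q_j(x_j)\,dx_j=\int q_j g_j\,dx_j$, where $\mathcal{S}_j$ is a "safe" region, $g_j$ its indicator function, and $\epsilon\in[0,1]$. $\gamma,\zeta,\eta$ are Lagrange multipliers; stationary points are in the sense of the calculus of variations with marginalization constraints imposed. *)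

theory Defs
  imports "HOL-Analysis.Analysis"
begin

text \<open>Factor graph: factors of type 'f (set Fs), variables of type 'v,
  V a = neighbourhood of factor a, variable values of type 'x with
  reference measure M (dx).  Factor functions f a act on assignments
  x :: 'v \<Rightarrow> 'x (only the coordinates in V a matter).
  zeta i a is the Lagrange multiplier function zeta_{ia}, mu_{ia} = exp zeta_{ia}.\<close>

definition var_nbrs :: "'f set \<Rightarrow> ('f \<Rightarrow> 'v set) \<Rightarrow> 'v \<Rightarrow> 'f set" where
  "var_nbrs Fs V j = {a \<in> Fs. j \<in> V a}"

definition msg_fv ::
  "'x measure \<Rightarrow> ('f \<Rightarrow> 'v set) \<Rightarrow> ('f \<Rightarrow> ('v \<Rightarrow> 'x) \<Rightarrow> real)
   \<Rightarrow> ('v \<Rightarrow> 'f \<Rightarrow> 'x \<Rightarrow> real) \<Rightarrow> 'f \<Rightarrow> 'v \<Rightarrow> 'x \<Rightarrow> real" where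
  "msg_fv M V f zeta a j y =
     (\<integral>x. f a (x(j := y)) * (\<Prod>i\<in>V a - {j}. exp (zeta i a (x i)))
        \<partial>(PiM (V a - {j}) (\<lambda>_. M)))"

definition qstar_unnorm ::
  "'x measure \<Rightarrow> 'f set \<Rightarrow> ('f \<Rightarrow> 'v set) \<Rightarrow> ('f \<Rightarrow> ('v \<Rightarrow> 'x) \<Rightarrow> real)
   \<Rightarrow> ('v \<Rightarrow> 'f \<Rightarrow> 'x \<Rightarrow> real) \<Rightarrow> 'x set \<Rightarrow> 'v \<Rightarrow> real \<Rightarrow> 'x \<Rightarrow> real" where
  "qstar_unnorm M Fs V f zeta S j eta y =
     exp (- eta * indicator S y) * (\<Prod>a\<in>var_nbrs Fs V j. msg_fv M V f zeta a j y)"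

definition qstar ::
  "'x measure \<Rightarrow> 'f set \<Rightarrow> ('f \<Rightarrow> 'v set) \<Rightarrow> ('f \<Rightarrow> ('v \<Rightarrow> 'x) \<Rightarrow> real)
   \<Rightarrow> ('v \<Rightarrow> 'f \<Rightarrow> 'x \<Rightarrow> real) \<Rightarrow> 'x set \<Rightarrow> 'v \<Rightarrow> real \<Rightarrow> 'x \<Rightarrow> real" where
  "qstar M Fs V f zeta S j eta y =
     qstar_unnorm M Fs V f zeta S j eta y
       / (\<integral>z. qstar_unnorm M Fs V f zeta S j eta z \<partial>M)"

definition q0 ::
  "'x measure \<Rightarrow> 'f set \<Rightarrow> ('f \<Rightarrow> 'v set) \<Rightarrow> ('f \<Rightarrow> ('v \<Rightarrow> 'x) \<Rightarrow> real)
   \<Rightarrow> ('v \<Rightarrow> 'f \<Rightarrow> 'x \<Rightarrow> real) \<Rightarrow> 'x set \<Rightarrow> 'v \<Rightarrow> 'x \<Rightarrow> real" where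
  "q0 M Fs V f zeta S j = qstar M Fs V f zeta S j 0"

definition Phi0 ::
  "'x measure \<Rightarrow> 'f set \<Rightarrow> ('f \<Rightarrow> 'v set) \<Rightarrow> ('f \<Rightarrow> ('v \<Rightarrow> 'x) \<Rightarrow> real)
   \<Rightarrow> ('v \<Rightarrow> 'f \<Rightarrow> 'x \<Rightarrow> real) \<Rightarrow> 'x set \<Rightarrow> 'v \<Rightarrow> real" where
  "Phi0 M Fs V f zeta S j = (\<integral>y. q0 M Fs V f zeta S j y * indicator S y \<partial>M)"

definition eta_star :: "real \<Rightarrow> real \<Rightarrow> real" where
  "eta_star \<epsilon> \<Phi> = ln (\<epsilon> * \<Phi>) - ln (1 - \<epsilon>) - ln (1 - \<Phi>)"

end

theory Submission
  imports Defs
begin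

theorem theorem1:
  fixes M :: "'x measure" and Fs :: "'f set" and V :: "'f \<Rightarrow> 'v set"
    and f :: "'f \<Rightarrow> ('v \<Rightarrow> 'x) \<Rightarrow> real" and zeta :: "'v \<Rightarrow> 'f \<Rightarrow> 'x \<Rightarrow> real"
    and S :: "'x set" and j :: 'v and \<epsilon> \<eta> :: real
  assumes "finite Fs"
    and "\<And>a. a \<in> Fs \<Longrightarrow> finite (V a)"
    and "\<And>a x. a \<in> Fs \<Longrightarrow> f a x \<ge> 0"
    and "S \<in> sets M"
    and "0 < \<epsilon>" and "\<epsilon> < 1"
    and "integrable M (\<lambda>y. \<Prod>a\<in>var_nbrs Fs V j. msg_fv M V f zeta a j y)"
    and active: "(\<integral>y. qstar M Fs V f zeta S j \<eta> y * indicator S y \<partial>M) = 1 - \<epsilon>"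
  shows "\<eta> = eta_star \<epsilon> (Phi0 M Fs V f zeta S j) \<and>
    (\<forall>y. qstar M Fs V f zeta S j \<eta> y =
      (if y \<in> S
       then (1 - \<epsilon>) / Phi0 M Fs V f zeta S j * q0 M Fs V f zeta S j y
       else \<epsilon> / (1 - Phi0 M Fs V f zeta S j) * q0 M Fs V f zeta S j y))"
proof -
  define P where "P = (\<lambda>y. \<Prod>a\<in>var_nbrs Fs V j. msg_fv M V f zeta a j y)"
  have intP: "integrable M P" using assms(7) by (simp add: P_def)
  have intPS: "integrable M (\<lambda>y. P y * indicator S y)"
  proof -
    have "integrable M (\<lambda>y. indicator S y *\<^sub>R P y)"
      using assms(4) intP by (rule integrable_mult_indicator)
    then show ?thesis by (simp add: mult.commute)
  qed
  have Pnn: "P y \<ge> 0" for y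
    unfolding P_def
  proof (rule prod_nonneg)
    fix a assume "a \<in> var_nbrs Fs V j"
    then have "a \<in> Fs" by (simp add: var_nbrs_def)
    then show "msg_fv M V f zeta a j y \<ge> 0"
      unfolding msg_fv_def using assms(3)
      by (intro Bochner_Integration.integral_nonneg) (auto intro!: mult_nonneg_nonneg prod_nonneg)
  qed
  define T where "T = (\<integral>y. P y \<partial>M)"
  define A where "A = (\<integral>y. P y * indicator S y \<partial>M)"
  have Ann: "A \<ge> 0" unfolding A_def using Pnn by (intro Bochner_Integration.integral_nonneg) auto
  have TA: "T - A \<ge> 0"
  proof -
    have "T - A = (\<integral>y. P y - P y * indicator S y \<partial>M)"
      unfolding T_def A_def using intP intPS by (simp add: Bochner_Integration.integral_diff)
    also have "\<dots> \<ge> 0" using Pnn by (intro Bochner_Integration.integral_nonneg) (auto simp: indicator_def)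
    finally show ?thesis .
  qed
  have U: "qstar_unnorm M Fs V f zeta S j e y = P y + (exp (-e) - 1) * (P y * indicator S y)" for e y
    unfolding qstar_unnorm_def P_def by (auto simp: indicator_def algebra_simps)
  have Z: "(\<integral>y. qstar_unnorm M Fs V f zeta S j e y \<partial>M) = T + (exp (-e) - 1) * A" for e
    unfolding U T_def A_def using intP intPS by simp
  have QS: "qstar M Fs V f zeta S j e y * indicator S y
      = (exp (-e) * (P y * indicator S y)) / (T + (exp (-e) - 1) * A)" for e y
    unfolding qstar_def Z U by (auto simp: indicator_def algebra_simps)
  have Q: "qstar M Fs V f zeta S j e y = (if y \<in> S then exp (-e) * P y else P y) / (T + (exp (-e) - 1) * A)" for e y
    unfolding qstar_def Z U by (auto simp: indicator_def algebra_simps)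
  have act: "exp (-\<eta>) * A / (T + (exp (-\<eta>) - 1) * A) = 1 - \<epsilon>"
    using active unfolding QS by (simp add: A_def)
  define B where "B = T - A"
  have Bnn: "B \<ge> 0" using TA B_def by simp
  have Zeq: "T + (exp (-\<eta>) - 1) * A = exp (-\<eta>) * A + B" by (simp add: B_def algebra_simps)
  have Zpos: "exp (-\<eta>) * A + B \<noteq> 0"
    using act Zeq assms(6) by auto
  have Apos: "A > 0" using act Zeq assms(6) Ann by (cases "A = 0") auto
  have Bpos: "B > 0"
  proof (rule ccontr)
    assume "\<not> B > 0" then have "B = 0" using Bnn by simp
    then show False using act Zeq Apos assms(5) by simp
  qed
  have key: "exp (-\<eta>) * A * \<epsilon> = (1 - \<epsilon>) * B"
    using act Zeq Zpos by (simp add: field_simps)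
  have Phi: "Phi0 M Fs V f zeta S j = A / (A + B)"
    unfolding Phi0_def q0_def QS by (simp add: A_def B_def)
  have q0e: "q0 M Fs V f zeta S j y = P y / (A + B)" for y
    unfolding q0_def Q by (simp add: B_def)
  have oneminus: "1 - A / (A + B) = B / (A + B)" using Apos Bpos by (simp add: field_simps)
  have eexp: "exp (-\<eta>) = (1 - \<epsilon>) * B / (\<epsilon> * A)"
    using key Apos assms(5) by (simp add: field_simps)
  have "\<eta> = - ln ((1 - \<epsilon>) * B / (\<epsilon> * A))"
    using arg_cong[OF eexp, of ln] by simp
  also have "\<dots> = ln (\<epsilon> * (A / (A + B))) - ln (1 - \<epsilon>) - ln (B / (A + B))"
    using Apos Bpos assms(5,6) by (simp add: ln_div ln_mult)
  finally have e1: "\<eta> = eta_star \<epsilon> (Phi0 M Fs V f zeta S j)"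
    unfolding eta_star_def Phi oneminus .
  have e2: "qstar M Fs V f zeta S j \<eta> y =
      (if y \<in> S
       then (1 - \<epsilon>) / Phi0 M Fs V f zeta S j * q0 M Fs V f zeta S j y
       else \<epsilon> / (1 - Phi0 M Fs V f zeta S j) * q0 M Fs V f zeta S j y)" for y
  proof -
    have ZZ: "T + (exp (-\<eta>) - 1) * A = (1 - \<epsilon>) * B / \<epsilon> + B"
      unfolding Zeq using eexp Apos assms(5) by (simp add: field_simps)
    show ?thesis unfolding Q ZZ Phi oneminus q0e eexp
      using Apos Bpos assms(5,6) by (auto simp: field_simps B_def)
  qed
  show ?thesis using e1 e2 by blast
qed

end
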